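(* Let $n\ge0$ and $k\ge1$ be integers, $\mathcal{H}$ a separable infinite-dimensional complex Hilbert space with orthonormal basis $\{e_m\}_{m\ge0}$, and $T$ a bounded linear operator on $\mathcal{H}$ such that for some scalars $a_{ij}$ ($0\le i\le n+k$, $0\le j\le n$), $Te_j=\sum_{i=0}^{n+k}a_{ij}e_i$ for $0\le j\le n$ and $Te_j=e_{j+k}$ for $j\ge n+1$. Suppose the matrix $A_1=(a_{ij})_{0\le i,j\le n}$ is a contraction on $\mathbb{C}^{n+1}$ (no contractivity of $T$ itself is assumed). Then $T$ has no non-zero eigenvalue if and only if for every eigenvector $(h_0,\dots,h_n)$ of $A_1$ corresponding to a non-zero eigenvalue, there exists $l\in\{1,\dots,k\}$ with $\sum_{r=0}^{n}a_{n+l,r}h_r\neq0$. *)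

theory Defs
  imports "HOL-Analysis.Analysis"
begin

text \<open>The separable infinite-dimensional complex Hilbert space H with orthonormal basis
  (e_m) is represented through its coordinates w.r.t. that basis, i.e. as the space
  l2(N) of square-summable complex sequences; e_m becomes the m-th unit sequence.\<close>

definition ell2 :: "(nat \<Rightarrow> complex) set" where
  "ell2 = {x. summable (\<lambda>m. (cmod (x m))\<^sup>2)}"

definition ell2_norm :: "(nat \<Rightarrow> complex) \<Rightarrow> real" where
  "ell2_norm x = sqrt (\<Sum>m. (cmod (x m))\<^sup>2)"

definition unit_seq :: "nat \<Rightarrow> nat \<Rightarrow> complex" where
  "unit_seq j = (\<lambda>m. if m = j then 1 else 0)"

definition bounded_linear_op_ell2 :: "((nat \<Rightarrow> complex) \<Rightarrow> (nat \<Rightarrow> complex)) \<Rightarrow> bool" where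
  "bounded_linear_op_ell2 T \<longleftrightarrow>
     (\<forall>x\<in>ell2. T x \<in> ell2) \<and>
     (\<forall>x\<in>ell2. \<forall>y\<in>ell2. T (\<lambda>m. x m + y m) = (\<lambda>m. T x m + T y m)) \<and>
     (\<forall>c. \<forall>x\<in>ell2. T (\<lambda>m. c * x m) = (\<lambda>m. c * T x m)) \<and>
     (\<exists>C. \<forall>x\<in>ell2. ell2_norm (T x) \<le> C * ell2_norm x)"

definition is_eigenvalue_ell2 :: "((nat \<Rightarrow> complex) \<Rightarrow> (nat \<Rightarrow> complex)) \<Rightarrow> complex \<Rightarrow> bool" where
  "is_eigenvalue_ell2 T \<mu> \<longleftrightarrow> (\<exists>x\<in>ell2. x \<noteq> (\<lambda>_. 0) \<and> T x = (\<lambda>m. \<mu> * x m))"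

definition is_contraction_matrix :: "nat \<Rightarrow> (nat \<Rightarrow> nat \<Rightarrow> complex) \<Rightarrow> bool" where
  "is_contraction_matrix n a \<longleftrightarrow>
     (\<forall>h :: nat \<Rightarrow> complex.
        (\<Sum>i\<le>n. (cmod (\<Sum>j\<le>n. a i j * h j))\<^sup>2) \<le> (\<Sum>j\<le>n. (cmod (h j))\<^sup>2))"

definition is_matrix_eigenvector :: "nat \<Rightarrow> (nat \<Rightarrow> nat \<Rightarrow> complex) \<Rightarrow> complex \<Rightarrow> (nat \<Rightarrow> complex) \<Rightarrow> bool" where
  "is_matrix_eigenvector n a \<mu> h \<longleftrightarrow>
     (\<exists>i\<le>n. h i \<noteq> 0) \<and> (\<forall>i\<le>n. (\<Sum>r\<le>n. a i r * h r) = \<mu> * h i)"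

end

theory Submission imports Defs begin

lemma fin_ell2: "(\<lambda>m. if m \<le> N then x m else 0) \<in> ell2"
  unfolding ell2_def by (auto intro!: summable_finite[of "{..N}"] split: if_splits)

lemma unit_ell2: "unit_seq j \<in> ell2"
  unfolding ell2_def unit_seq_def by (auto intro!: summable_finite[of "{j}"] split: if_splits)

lemma T_add: "bounded_linear_op_ell2 T \<Longrightarrow> x \<in> ell2 \<Longrightarrow> y \<in> ell2 \<Longrightarrow> T (\<lambda>m. x m + y m) = (\<lambda>m. T x m + T y m)"
  unfolding bounded_linear_op_ell2_def by blast

lemma fin_lin:
  assumes bl: "bounded_linear_op_ell2 T"
  shows "T (\<lambda>m. if m \<le> N then x m else 0) = (\<lambda>i. \<Sum>j\<le>N. x j * T (unit_seq j) i)"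
proof (induction N)
  case 0
  have "(\<lambda>m. if m \<le> 0 then x m else 0) = (\<lambda>m. x 0 * unit_seq 0 m)"
    by (auto simp: unit_seq_def)
  then show ?case using bl unit_ell2[of 0] unfolding bounded_linear_op_ell2_def by auto
next
  case (Suc N)
  have e: "(\<lambda>m. if m \<le> Suc N then x m else 0) = (\<lambda>m. (if m \<le> N then x m else 0) + (\<lambda>m. x (Suc N) * unit_seq (Suc N) m) m)"
    by (rule ext) (auto simp: unit_seq_def le_Suc_eq)
  have s: "(\<lambda>m. x (Suc N) * unit_seq (Suc N) m) \<in> ell2"
    unfolding ell2_def unit_seq_def by (auto intro!: summable_finite[of "{Suc N}"] split: if_splits)
  have "T (\<lambda>m. if m \<le> Suc N then x m else 0) = (\<lambda>i. T (\<lambda>m. if m \<le> N then x m else 0) i + T (\<lambda>m. x (Suc N) * unit_seq (Suc N) m) i)"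
    unfolding e using T_add[OF bl fin_ell2[of N x] s] by simp
  also have "T (\<lambda>m. x (Suc N) * unit_seq (Suc N) m) = (\<lambda>i. x (Suc N) * T (unit_seq (Suc N)) i)"
    using bl unit_ell2 unfolding bounded_linear_op_ell2_def by blast
  finally show ?case using Suc by simp
qed

lemma coord_le_norm:
  assumes "y \<in> ell2" shows "cmod (y i) \<le> ell2_norm y"
proof -
  have "(\<Sum>m\<in>{i}. (cmod (y m))\<^sup>2) \<le> (\<Sum>m. (cmod (y m))\<^sup>2)"
    using assms unfolding ell2_def by (intro sum_le_suminf) auto
  then have "sqrt ((cmod (y i))\<^sup>2) \<le> ell2_norm y" unfolding ell2_norm_def
    using real_sqrt_le_mono by fastforce
  then show ?thesis by simp
qed

lemma tail_ell2: assumes "x \<in> ell2" shows "(\<lambda>m. if m \<le> N then 0 else x m) \<in> ell2"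
  using assms unfolding ell2_def
  by (auto intro: summable_comparison_test'[where N=0])

lemma tail_norm: assumes "x \<in> ell2"
  shows "(\<lambda>N. ell2_norm (\<lambda>m. if m \<le> N then 0 else x m)) \<longlonglongrightarrow> 0"
proof -
  let ?f = "\<lambda>m. (cmod (x m))\<^sup>2"
  have sf: "summable ?f" using assms unfolding ell2_def by simp
  have eq: "ell2_norm (\<lambda>m. if m \<le> N then 0 else x m) = sqrt (suminf ?f - (\<Sum>m\<le>N. ?f m))" for N
  proof -
    have s2: "summable (\<lambda>m. if m \<le> N then ?f m else 0)"
      by (auto intro!: summable_finite[of "{..N}"])
    have "(\<Sum>m. if m \<le> N then ?f m else 0) = (\<Sum>m\<le>N. ?f m)"
      by (subst suminf_finite[of "{..N}"]) auto
    moreover have "(\<Sum>m. (cmod (if m \<le> N then 0 else x m))\<^sup>2) = (\<Sum>m. ?f m - (if m \<le> N then ?f m else 0))"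
      by (rule arg_cong[where f=suminf]) auto
    moreover have "(\<Sum>m. ?f m - (if m \<le> N then ?f m else 0)) = suminf ?f - (\<Sum>m. if m \<le> N then ?f m else 0)"
      using suminf_diff[OF sf s2] by simp
    ultimately show ?thesis unfolding ell2_norm_def by simp
  qed
  have "(\<lambda>N. suminf ?f - (\<Sum>m\<le>N. ?f m)) \<longlonglongrightarrow> suminf ?f - suminf ?f"
    by (intro tendsto_intros summable_LIMSEQ' sf)
  then have "(\<lambda>N. sqrt (suminf ?f - (\<Sum>m\<le>N. ?f m))) \<longlonglongrightarrow> sqrt 0"
    by (intro tendsto_intros) simp
  then show ?thesis unfolding eq by simp
qed

lemma fin_formula:
  assumes h3: "\<And>j. j \<le> n \<Longrightarrow> T (unit_seq j) = (\<lambda>i. if i \<le> n + k then a i j else 0)"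
    and h4: "\<And>j. j \<ge> n + 1 \<Longrightarrow> T (unit_seq j) = unit_seq (j + k)"
    and N: "n \<le> N" "i \<le> N"
  shows "(\<Sum>j\<le>N. x j * T (unit_seq j) i) = (if i \<le> n + k then (\<Sum>j\<le>n. a i j * x j) else x (i - k))"
proof -
  have U: "{..N} = {..n} \<union> {Suc n..N}" using N by auto
  have "(\<Sum>j\<le>N. x j * T (unit_seq j) i) = (\<Sum>j\<le>n. x j * T (unit_seq j) i) + (\<Sum>j\<in>{Suc n..N}. x j * T (unit_seq j) i)"
    unfolding U by (rule sum.union_disjoint) auto
  also have "(\<Sum>j\<le>n. x j * T (unit_seq j) i) = (if i \<le> n + k then (\<Sum>j\<le>n. a i j * x j) else 0)"
    using h3 by (auto simp: mult.commute)
  also have "(\<Sum>j\<in>{Suc n..N}. x j * T (unit_seq j) i) = (\<Sum>j\<in>{Suc n..N}. if j = i - k \<and> k \<le> i then x j else 0)"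
    using h4 by (intro sum.cong) (auto simp: unit_seq_def)
  also have "\<dots> = (if i \<le> n + k then 0 else x (i - k))"
  proof (cases "k \<le> i")
    case True
    then have "(\<Sum>j\<in>{Suc n..N}. if j = i - k \<and> k \<le> i then x j else 0) = (\<Sum>j\<in>{Suc n..N}. if j = i - k then x j else 0)"
      by simp
    also have "\<dots> = (if i - k \<in> {Suc n..N} then x (i - k) else 0)"
      by (simp add: sum.delta')
    finally show ?thesis using True N by auto
  qed auto
  finally show ?thesis by auto
qed

lemma coord:
  assumes bl: "bounded_linear_op_ell2 T"
    and h3: "\<And>j. j \<le> n \<Longrightarrow> T (unit_seq j) = (\<lambda>i. if i \<le> n + k then a i j else 0)"
    and h4: "\<And>j. j \<ge> n + 1 \<Longrightarrow> T (unit_seq j) = unit_seq (j + k)"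
    and x: "x \<in> ell2"
  shows "T x i = (if i \<le> n + k then (\<Sum>j\<le>n. a i j * x j) else x (i - k))"
proof -
  define F where "F = (if i \<le> n + k then (\<Sum>j\<le>n. a i j * x j) else x (i - k))"
  obtain C where C: "\<And>y. y \<in> ell2 \<Longrightarrow> ell2_norm (T y) \<le> C * ell2_norm y"
    using bl unfolding bounded_linear_op_ell2_def by blast
  let ?g = "\<lambda>N. ell2_norm (\<lambda>m. if m \<le> N then 0 else x m)"
  have lim: "(\<lambda>N. C * ?g N) \<longlonglongrightarrow> C * 0"
    by (intro tendsto_intros tail_norm x)
  have "\<exists>N0. \<forall>N\<ge>N0. cmod (T x i - F) \<le> C * ?g N"
  proof (intro exI allI impI)
    fix N assume "max n i \<le> N"
    then have N: "n \<le> N" "i \<le> N" by auto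
    have xe: "x = (\<lambda>m. (if m \<le> N then x m else 0) + (if m \<le> N then 0 else x m))"
      by auto
    have "T x = (\<lambda>m. T (\<lambda>m. if m \<le> N then x m else 0) m + T (\<lambda>m. if m \<le> N then 0 else x m) m)"
      apply (subst xe)
      using T_add[OF bl fin_ell2[of N x] tail_ell2[OF x, of N]] by simp
    then have "T x i - F = T (\<lambda>m. if m \<le> N then 0 else x m) i"
      using fin_lin[OF bl, of N x] fin_formula[OF h3 h4 N, of x] unfolding F_def by simp
    then have "cmod (T x i - F) \<le> ell2_norm (T (\<lambda>m. if m \<le> N then 0 else x m))"
      using coord_le_norm bl tail_ell2[OF x] unfolding bounded_linear_op_ell2_def by metis
    also have "\<dots> \<le> C * ?g N" using C tail_ell2[OF x] by blast
    finally show "cmod (T x i - F) \<le> C * ?g N" .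
  qed
  then have "cmod (T x i - F) \<le> C * 0" by (rule LIMSEQ_le_const[OF lim])
  then show ?thesis unfolding F_def[symmetric] by simp
qed

theorem corollary4p2:
  fixes n k :: nat and a :: "nat \<Rightarrow> nat \<Rightarrow> complex"
    and T :: "(nat \<Rightarrow> complex) \<Rightarrow> (nat \<Rightarrow> complex)"
  assumes "k \<ge> 1"
    and "bounded_linear_op_ell2 T"
    and "\<And>j. j \<le> n \<Longrightarrow> T (unit_seq j) = (\<lambda>i. if i \<le> n + k then a i j else 0)"
    and "\<And>j. j \<ge> n + 1 \<Longrightarrow> T (unit_seq j) = unit_seq (j + k)"
    and "is_contraction_matrix n a"
  shows "(\<forall>\<mu>. \<mu> \<noteq> 0 \<longrightarrow> \<not> is_eigenvalue_ell2 T \<mu>) \<longleftrightarrow>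
         (\<forall>\<mu> h. \<mu> \<noteq> 0 \<and> is_matrix_eigenvector n a \<mu> h \<longrightarrow>
            (\<exists>l\<in>{1..k}. (\<Sum>r\<le>n. a (n + l) r * h r) \<noteq> 0))"
proof -
  have cd: "T x i = (if i \<le> n + k then (\<Sum>j\<le>n. a i j * x j) else x (i - k))" if "x \<in> ell2" for x i
    using that by (intro coord[OF assms(2)]) (auto simp: assms(3,4))
  show ?thesis
proof
  assume L: "\<forall>\<mu>. \<mu> \<noteq> 0 \<longrightarrow> \<not> is_eigenvalue_ell2 T \<mu>"
  show "\<forall>\<mu> h. \<mu> \<noteq> 0 \<and> is_matrix_eigenvector n a \<mu> h \<longrightarrow>
            (\<exists>l\<in>{1..k}. (\<Sum>r\<le>n. a (n + l) r * h r) \<noteq> 0)"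
  proof (intro allI impI, rule ccontr)
    fix \<mu> h assume mh: "\<mu> \<noteq> 0 \<and> is_matrix_eigenvector n a \<mu> h"
      and nl: "\<not> (\<exists>l\<in>{1..k}. (\<Sum>r\<le>n. a (n + l) r * h r) \<noteq> 0)"
    define x where "x = (\<lambda>m. if m \<le> n then h m else 0)"
    have xe: "x \<in> ell2" unfolding x_def by (rule fin_ell2)
    obtain i0 where i0: "i0 \<le> n" "h i0 \<noteq> 0" using mh unfolding is_matrix_eigenvector_def by blast
    have xn: "x \<noteq> (\<lambda>_. 0)"
    proof
      assume "x = (\<lambda>_. 0)"
      then have "x i0 = 0" by simp
      then show False using i0 by (simp add: x_def)
    qed
    have sx: "(\<Sum>j\<le>n. a i j * x j) = (\<Sum>j\<le>n. a i j * h j)" for i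
      unfolding x_def by (intro sum.cong) auto
    have "T x i = \<mu> * x i" for i
    proof -
      consider "i \<le> n" | "n < i" "i \<le> n + k" | "n + k < i" by linarith
      then show ?thesis
      proof cases
        case 1 then show ?thesis using cd[OF xe, of i] sx mh unfolding is_matrix_eigenvector_def x_def
          by auto
      next
        case 2
        define l where "l = i - n"
        have l: "l \<in> {1..k}" "i = n + l" using 2 unfolding l_def by auto
        then show ?thesis using cd[OF xe, of i] sx nl 2 unfolding x_def by auto
      next
        case 3 then show ?thesis using cd[OF xe, of i] unfolding x_def by auto
      qed
    qed
    then have "is_eigenvalue_ell2 T \<mu>" unfolding is_eigenvalue_ell2_def using xe xn by blast
    then show False using L mh by blast
  qed
next
  assume R: "\<forall>\<mu> h. \<mu> \<noteq> 0 \<and> is_matrix_eigenvector n a \<mu> h \<longrightarrow>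
            (\<exists>l\<in>{1..k}. (\<Sum>r\<le>n. a (n + l) r * h r) \<noteq> 0)"
  show "\<forall>\<mu>. \<mu> \<noteq> 0 \<longrightarrow> \<not> is_eigenvalue_ell2 T \<mu>"
  proof (intro allI impI notI)
    fix \<mu> :: complex assume mu: "\<mu> \<noteq> 0" and "is_eigenvalue_ell2 T \<mu>"
    then obtain x where xe: "x \<in> ell2" and xn: "x \<noteq> (\<lambda>_. 0)" and Tx: "T x = (\<lambda>m. \<mu> * x m)"
      unfolding is_eigenvalue_ell2_def by blast
    have E2: "(\<Sum>j\<le>n. a i j * x j) = \<mu> * x i" if "i \<le> n + k" for i
      using cd[OF xe, of i] fun_cong[OF Tx, of i] that by simp
    have E3: "x (i - k) = \<mu> * x i" if "n + k < i" for i
      using cd[OF xe, of i] fun_cong[OF Tx, of i] that by simp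
    show False
    proof (cases "\<forall>i\<le>n. x i = 0")
      case True
      have z: "x m = 0" for m
      proof (induction m rule: less_induct)
        case (less m)
        show ?case
        proof (cases "m \<le> n + k")
          case True
          have "(\<Sum>j\<le>n. a m j * x j) = 0" using \<open>\<forall>i\<le>n. x i = 0\<close> by simp
          then show ?thesis using E2[OF True] mu by simp
        next
          case False
          then have "m - k < m" using assms(1) by linarith
          then have "x (m - k) = 0" by (rule less.IH)
          then show ?thesis using E3[of m] False mu by simp
        qed
      qed
      then show False using xn by auto
    next
      case False
      then have ev: "is_matrix_eigenvector n a \<mu> x"
        unfolding is_matrix_eigenvector_def using E2 by auto
      then obtain l where l: "l \<in> {1..k}" "(\<Sum>r\<le>n. a (n + l) r * x r) \<noteq> 0"
        using R mu by blast
      then have xl: "x (n + l) \<noteq> 0" using E2[of "n + l"] by auto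
      obtain i0 where i0: "i0 \<le> n" "x i0 \<noteq> 0" using False by blast
      have "(\<Sum>i\<le>n. (cmod (\<Sum>j\<le>n. a i j * x j))\<^sup>2) \<le> (\<Sum>j\<le>n. (cmod (x j))\<^sup>2)"
        using assms(5) unfolding is_contraction_matrix_def by blast
      also have "(\<Sum>i\<le>n. (cmod (\<Sum>j\<le>n. a i j * x j))\<^sup>2) = (cmod \<mu>)\<^sup>2 * (\<Sum>j\<le>n. (cmod (x j))\<^sup>2)"
        using E2 by (simp add: sum_distrib_left norm_mult power_mult_distrib)
      finally have ineq: "(cmod \<mu>)\<^sup>2 * (\<Sum>j\<le>n. (cmod (x j))\<^sup>2) \<le> 1 * (\<Sum>j\<le>n. (cmod (x j))\<^sup>2)" by simp
      have "(cmod (x i0))\<^sup>2 \<le> (\<Sum>j\<le>n. (cmod (x j))\<^sup>2)"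
        using i0 by (intro member_le_sum) auto
      then have "0 < (\<Sum>j\<le>n. (cmod (x j))\<^sup>2)" using i0 by (smt (verit) zero_less_power2 norm_eq_zero)
      then have "(cmod \<mu>)\<^sup>2 \<le> 1" using ineq mult_le_cancel_right_pos by blast
      then have m1: "cmod \<mu> \<le> 1" by (simp add: power_le_one_iff)
      have grow: "cmod (x (n + l)) \<le> cmod (x (n + l + t * k))" for t
      proof (induction t)
        case (Suc t)
        have "n + k < n + l + Suc t * k" using l by auto
        from E3[OF this] have "x (n + l + t * k) = \<mu> * x (n + l + Suc t * k)" by (simp add: add.assoc)
        then have "cmod (x (n + l + t * k)) \<le> cmod (x (n + l + Suc t * k))"
          using m1 by (simp add: norm_mult mult_left_le_one_le)
        then show ?case using Suc by linarith
      qed simp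
      have "(\<lambda>m. (cmod (x m))\<^sup>2) \<longlonglongrightarrow> 0"
        using xe unfolding ell2_def by (intro summable_LIMSEQ_zero) simp
      moreover have "strict_mono (\<lambda>t. n + l + t * k)"
        using assms(1) by (intro strict_monoI) simp
      ultimately have lim: "((\<lambda>m. (cmod (x m))\<^sup>2) \<circ> (\<lambda>t. n + l + t * k)) \<longlonglongrightarrow> 0"
        by (rule LIMSEQ_subseq_LIMSEQ)
      have "\<exists>N. \<forall>t\<ge>N. (cmod (x (n + l)))\<^sup>2 \<le> ((\<lambda>m. (cmod (x m))\<^sup>2) \<circ> (\<lambda>t. n + l + t * k)) t"
        using grow by (auto intro!: power_mono)
      from LIMSEQ_le_const[OF lim this] have "(cmod (x (n + l)))\<^sup>2 \<le> 0" .
      then show False using xl by simp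
    qed
  qed
qed
qed

end
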